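(* Let $F:[0,1]^{N}\times[0,1]\to\mathbb{R}$ be a non-constant analytic function. For every $\epsilon\in(0,1]$ such that $\Sigma_{\epsilon}\neq\emptyset$, there exists $\delta\in(0,1]$ such that $(\epsilon,\delta)\in A$.
   Context: "Analytic" means real analytic on a neighbourhood of $[0,1]^{N}\times[0,1]$. $\mathcal{F}_{\mathbf{x},\delta}=\{t\in[0,1]:|F(\mathbf{x},t)|\geq\delta\}$. $\Sigma=\{\mathbf{x}\in[0,1]^{N}:F(\mathbf{x},t)=0\ \forall t\in[0,1]\}$, $\Sigma_{\epsilon}=\{\mathbf{x}\in[0,1]^{N}:\operatorname{dist}(\mathbf{x},\Sigma)\geq\epsilon\}$ (with $\Sigma_\epsilon=[0,1]^N$ if $\Sigma=\emptyset$). $A=\{(\epsilon,\delta)\in(0,1]^{2}:\ \forall\mathbf{x}\in\Sigma_{\epsilon},\ \forall\xi\in[0,1],\ (\xi-\tfrac{\epsilon}{2},\xi+\tfrac{\epsilon}{2})\cap\mathcal{F}_{\mathbf{x},\delta}\neq\emptyset\}$. *)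

theory Defs
  imports "HOL-Analysis.Analysis"
begin

definition unit_cube :: "(real ^ 'n) set" where
  "unit_cube = {x. \<forall>i. 0 \<le> x $ i \<and> x $ i \<le> 1}"

text \<open>Real analyticity of a function of (x,t) in R^N x R at a point:
  locally equal to an (unconditionally, hence absolutely) convergent multivariate power series.\<close>
definition real_analytic_at :: "(real ^ 'n \<Rightarrow> real \<Rightarrow> real) \<Rightarrow> real ^ 'n \<Rightarrow> real \<Rightarrow> bool" where
  "real_analytic_at F x0 t0 \<longleftrightarrow>
     (\<exists>r>0. \<exists>c :: ('n \<Rightarrow> nat) \<times> nat \<Rightarrow> real.
        \<forall>x t. dist x x0 < r \<and> \<bar>t - t0\<bar> < r \<longrightarrow>
          ((\<lambda>(\<alpha>, k). c (\<alpha>, k) * (\<Prod>i\<in>UNIV. (x $ i - x0 $ i) ^ (\<alpha> i)) * (t - t0) ^ k)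
             has_sum F x t) UNIV)"

definition analytic_near_cube :: "(real ^ 'n \<Rightarrow> real \<Rightarrow> real) \<Rightarrow> bool" where
  "analytic_near_cube F \<longleftrightarrow>
     (\<exists>U. open U \<and> unit_cube \<times> {0..1} \<subseteq> U \<and> (\<forall>(x, t)\<in>U. real_analytic_at F x t))"

definition Fset :: "(real ^ 'n \<Rightarrow> real \<Rightarrow> real) \<Rightarrow> real ^ 'n \<Rightarrow> real \<Rightarrow> real set" where
  "Fset F x \<delta> = {t \<in> {0..1}. \<bar>F x t\<bar> \<ge> \<delta>}"

definition Sigma0 :: "(real ^ 'n \<Rightarrow> real \<Rightarrow> real) \<Rightarrow> (real ^ 'n) set" where
  "Sigma0 F = {x \<in> unit_cube. \<forall>t\<in>{0..1}. F x t = 0}"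

definition Sigma_eps :: "(real ^ 'n \<Rightarrow> real \<Rightarrow> real) \<Rightarrow> real \<Rightarrow> (real ^ 'n) set" where
  "Sigma_eps F \<epsilon> = (if Sigma0 F = {} then unit_cube
                      else {x \<in> unit_cube. infdist x (Sigma0 F) \<ge> \<epsilon>})"

definition Aset :: "(real ^ 'n \<Rightarrow> real \<Rightarrow> real) \<Rightarrow> (real \<times> real) set" where
  "Aset F = {(\<epsilon>, \<delta>). \<epsilon> \<in> {0<..1} \<and> \<delta> \<in> {0<..1} \<and>
     (\<forall>x\<in>Sigma_eps F \<epsilon>. \<forall>\<xi>\<in>{0..1}.
        {\<xi> - \<epsilon>/2 <..< \<xi> + \<epsilon>/2} \<inter> Fset F x \<delta> \<noteq> {})}"

end

theory Submission imports Defs "HOL-Complex_Analysis.Cauchy_Integral_Formula"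
begin

lemma has_sum_single_pt: "((\<lambda>p. if p = a then (v::real) else 0) has_sum v) UNIV"
proof -
  have "((\<lambda>p. if p = a then (v::real) else 0) has_sum (\<Sum>p\<in>{a}. if p = a then v else 0)) {a}"
    by (rule has_sum_finite) simp
  then have "((\<lambda>p. if p = a then (v::real) else 0) has_sum v) {a}" by simp
  then show ?thesis by (subst has_sum_cong_neutral[where T="{a}"]) auto
qed

lemma analytic_cont:
  fixes F :: "real ^ 'n \<Rightarrow> real \<Rightarrow> real"
  assumes "real_analytic_at F x0 t0"
  shows "\<forall>e>0. \<exists>d>0. \<forall>y t. dist y x0 < d \<and> \<bar>t - t0\<bar> < d \<longrightarrow> \<bar>F y t - F x0 t0\<bar> < e"
proof -
  obtain r and c :: "('n \<Rightarrow> nat) \<times> nat \<Rightarrow> real" where r: "r > 0" and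
    hs: "\<And>x t. dist x x0 < r \<Longrightarrow> \<bar>t - t0\<bar> < r \<Longrightarrow>
          ((\<lambda>(\<alpha>, k). c (\<alpha>, k) * (\<Prod>i\<in>UNIV. (x $ i - x0 $ i) ^ (\<alpha> i)) * (t - t0) ^ k)
             has_sum F x t) UNIV"
    using assms unfolding real_analytic_at_def by blast
  define N where "N = real CARD('n)"
  define \<rho> where "\<rho> = r / (2 * (N + 1))"
  have N0: "N \<ge> 0" unfolding N_def by simp
  have rho0: "\<rho> > 0" unfolding \<rho>_def using r N0 by simp
  have Nr: "0 \<le> N * r" using N0 r by simp
  have pp: "0 < N*r + r*2" "0 < r + N*(r*2)" using Nr r by linarith+
  have rhoN1: "N * \<rho> < r"
    unfolding \<rho>_def using r N0 pp by (simp add: field_simps)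
  have rhoN2: "\<rho> < r"
    unfolding \<rho>_def using r N0 pp by (simp add: field_simps)
  note rhoN = rhoN1 rhoN2
  define y :: "real ^ 'n" where "y = x0 + (\<chi> i. \<rho>)"
  have "dist y x0 = norm ((\<chi> i. \<rho>) :: real ^ 'n)" unfolding y_def dist_norm by simp
  also have "\<dots> \<le> (\<Sum>i\<in>UNIV. \<bar>((\<chi> i. \<rho>) :: real ^ 'n) $ i\<bar>)" by (rule norm_le_l1_cart)
  also have "\<dots> = N * \<rho>" using rho0 by (simp add: N_def)
  finally have dy: "dist y x0 < r" using rhoN by simp
  define deg where "deg = (\<lambda>(\<alpha>::'n \<Rightarrow> nat, k::nat). sum \<alpha> UNIV + k)"
  define G where "G = (\<lambda>p. \<bar>c p\<bar> * \<rho> ^ deg p)"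
  have termy: "(\<lambda>(\<alpha>, k). c (\<alpha>, k) * (\<Prod>i\<in>UNIV. (y $ i - x0 $ i) ^ (\<alpha> i)) * (t0 + \<rho> - t0) ^ k)
     = (\<lambda>p. c p * \<rho> ^ deg p)"
  proof (rule ext)
    fix p :: "('n \<Rightarrow> nat) \<times> nat"
    obtain \<alpha> k where p: "p = (\<alpha>, k)" by (cases p)
    have "(\<Prod>i\<in>UNIV. (y $ i - x0 $ i) ^ (\<alpha> i)) = \<rho> ^ sum \<alpha> UNIV"
      by (simp add: y_def power_sum)
    then show "(case p of (\<alpha>, k) \<Rightarrow> c (\<alpha>, k) * (\<Prod>i\<in>UNIV. (y $ i - x0 $ i) ^ (\<alpha> i)) * (t0 + \<rho> - t0) ^ k)
       = c p * \<rho> ^ deg p"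
      by (simp add: p deg_def power_add)
  qed
  have "((\<lambda>p. c p * \<rho> ^ deg p) has_sum F y (t0 + \<rho>)) UNIV"
    using hs[OF dy, of "t0 + \<rho>"] rhoN rho0 termy by simp
  then have sm: "(\<lambda>p. c p * \<rho> ^ deg p) summable_on UNIV" by (auto simp: summable_on_def)
  have "(\<lambda>p. \<bar>c p * \<rho> ^ deg p\<bar>) summable_on UNIV"
    using summable_on_iff_abs_summable_on_real[THEN iffD1, OF sm] by simp
  then have "G summable_on UNIV" using rho0 by (simp add: G_def abs_mult)
  define M where "M = infsum G UNIV"
  have GM: "(G has_sum M) UNIV" using \<open>G summable_on UNIV\<close> M_def
    by (simp add: summable_iff_has_sum_infsum)
  have M0: "M \<ge> 0" unfolding M_def G_def by (rule infsum_nonneg) (use rho0 in simp)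
  define p0 :: "('n \<Rightarrow> nat) \<times> nat" where "p0 = ((\<lambda>_. 0), 0)"
  have deg0: "deg p = 0 \<longleftrightarrow> p = p0" for p
    by (cases p) (auto simp: deg_def p0_def fun_eq_iff)
  have bound: "\<bar>F x t - c p0\<bar> \<le> l * M"
    if l: "0 < l" "l \<le> 1" and dx: "dist x x0 \<le> l * \<rho>" and dt: "\<bar>t - t0\<bar> \<le> l * \<rho>" for x t l
  proof -
    have lr: "l * \<rho> < r" using l rho0 rhoN 
    proof -
      have "l * \<rho> \<le> \<rho>" using l rho0 by simp
      then show ?thesis using rhoN by linarith
    qed
    have hx: "((\<lambda>(\<alpha>, k). c (\<alpha>, k) * (\<Prod>i\<in>UNIV. (x $ i - x0 $ i) ^ (\<alpha> i)) * (t - t0) ^ k)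
             has_sum F x t) UNIV" (is "(?T has_sum _) _")
      using hs dx dt lr by simp
    have comp: "\<bar>x $ i - x0 $ i\<bar> \<le> l * \<rho>" for i
      using component_le_norm_cart[of "x - x0" i] dx by (simp add: dist_norm)
    have pt: "\<bar>?T p - (if p = p0 then c p0 else 0)\<bar> \<le> l * G p" for p
    proof (cases "p = p0")
      case True then show ?thesis using rho0 l by (simp add: p0_def G_def)
    next
      case False
      obtain \<alpha> k where p: "p = (\<alpha>, k)" by (cases p)
      have d1: "deg p \<ge> 1" using deg0[of p] False by simp
      have "\<bar>?T p\<bar> = \<bar>c p\<bar> * (\<Prod>i\<in>UNIV. \<bar>x $ i - x0 $ i\<bar> ^ (\<alpha> i)) * \<bar>t - t0\<bar> ^ k"
        by (simp add: p abs_mult abs_prod power_abs)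
      also have "\<dots> \<le> \<bar>c p\<bar> * (\<Prod>i\<in>UNIV. (l * \<rho>) ^ (\<alpha> i)) * (l * \<rho>) ^ k"
        apply (intro mult_mono mult_left_mono prod_mono power_mono conjI)
        using comp dt l rho0 by (auto intro!: prod_nonneg mult_nonneg_nonneg)
      also have "\<dots> = \<bar>c p\<bar> * (l ^ deg p) * \<rho> ^ deg p"
      proof -
        have "(\<Prod>i\<in>UNIV. (l * \<rho>) ^ (\<alpha> i)) = (l * \<rho>) ^ sum \<alpha> UNIV"
          by (simp add: power_sum)
        then show ?thesis by (simp add: p deg_def power_add power_mult_distrib)
      qed
      also have "\<dots> \<le> \<bar>c p\<bar> * l * \<rho> ^ deg p"
        using power_decreasing[OF d1, of l] l rho0
        by (intro mult_right_mono mult_left_mono) auto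
      finally show ?thesis using False by (simp add: G_def mult_ac)
    qed
    have s1: "((\<lambda>p. (if p = p0 then c p0 else 0) + l * G p) has_sum (c p0 + l * M)) UNIV"
      by (intro has_sum_add has_sum_single_pt has_sum_cmult_right GM)
    have s2: "((\<lambda>p. (if p = p0 then c p0 else 0) + (- (l * G p))) has_sum (c p0 + - (l * M))) UNIV"
      by (intro has_sum_add has_sum_single_pt has_sum_uminusI has_sum_cmult_right GM)
    have pt1: "?T p \<le> (if p = p0 then c p0 else 0) + l * G p" for p
      using pt[of p] unfolding abs_le_iff by linarith
    have pt2: "(if p = p0 then c p0 else 0) + - (l * G p) \<le> ?T p" for p
      using pt[of p] unfolding abs_le_iff by linarith
    have "F x t \<le> c p0 + l * M"
      by (rule has_sum_mono[OF hx s1]) (rule pt1)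
    moreover have "c p0 + - (l * M) \<le> F x t"
      by (rule has_sum_mono[OF s2 hx]) (rule pt2)
    ultimately show ?thesis by auto
  qed
  show ?thesis
  proof (intro allI impI)
    fix e :: real assume e: "e > 0"
    define l where "l = min 1 (e / (4 * (M + 1)))"
    have l: "0 < l" "l \<le> 1" using e M0 by (auto simp: l_def)
    have lM: "l * M < e / 2"
    proof -
      have "l * M \<le> e / (4 * (M + 1)) * M" unfolding l_def using M0 by (intro mult_right_mono) auto
      also have "\<dots> = e / 4 * (M / (M + 1))" using M0 by (simp add: field_simps)
      also have "\<dots> \<le> e / 4 * 1" using M0 e by (intro mult_left_mono) auto
      also have "\<dots> < e / 2" using e by simp
      finally show ?thesis .
    qed
    have c0: "\<bar>F x0 t0 - c p0\<bar> \<le> l * M" using bound[OF l] l rho0 by simp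
    show "\<exists>d>0. \<forall>y t. dist y x0 < d \<and> \<bar>t - t0\<bar> < d \<longrightarrow> \<bar>F y t - F x0 t0\<bar> < e"
    proof (intro exI[of _ "l * \<rho>"] conjI allI impI)
      show "l * \<rho> > 0" using l rho0 by simp
      fix y' t assume "dist y' x0 < l * \<rho> \<and> \<bar>t - t0\<bar> < l * \<rho>"
      then have "\<bar>F y' t - c p0\<bar> \<le> l * M" using bound[OF l] by simp
      then show "\<bar>F y' t - F x0 t0\<bar> < e" using c0 lM by linarith
    qed
  qed
qed


lemma analytic_1d:
  fixes F :: "real ^ 'n \<Rightarrow> real \<Rightarrow> real"
  assumes "real_analytic_at F x0 t0"
  shows "\<exists>r>0. \<exists>a. \<forall>t. \<bar>t - t0\<bar> < r \<longrightarrow> (\<lambda>k. a k * (t - t0) ^ k) sums F x0 t"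
proof -
  obtain r and c :: "('n \<Rightarrow> nat) \<times> nat \<Rightarrow> real" where r: "r > 0" and
    hs: "\<And>x t. dist x x0 < r \<Longrightarrow> \<bar>t - t0\<bar> < r \<Longrightarrow>
          ((\<lambda>(\<alpha>, k). c (\<alpha>, k) * (\<Prod>i\<in>UNIV. (x $ i - x0 $ i) ^ (\<alpha> i)) * (t - t0) ^ k)
             has_sum F x t) UNIV"
    using assms unfolding real_analytic_at_def by blast
  define h :: "nat \<Rightarrow> ('n \<Rightarrow> nat) \<times> nat" where "h = (\<lambda>k. ((\<lambda>_. 0), k))"
  have injh: "inj h" unfolding h_def by (auto intro: injI)
  show ?thesis
  proof (intro exI[of _ r] conjI exI[of _ "\<lambda>k. c (h k)"] allI impI)
    show "r > 0" by (rule r)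
    fix t assume t: "\<bar>t - t0\<bar> < r"
    let ?T = "(\<lambda>(\<alpha>, k). c (\<alpha>, k) * (\<Prod>i\<in>UNIV. (x0 $ i - x0 $ i) ^ (\<alpha> i)) * (t - t0) ^ k)"
    have hx: "(?T has_sum F x0 t) UNIV" using hs[of x0 t] r t by simp
    have z: "?T p = 0" if "p \<in> UNIV - range h" for p
    proof -
      obtain \<alpha> k where p: "p = (\<alpha>, k)" by (cases p)
      have "\<alpha> \<noteq> (\<lambda>_. 0)" using that p by (auto simp: h_def)
      then obtain i where "\<alpha> i \<noteq> 0" by auto
      then have "(\<Prod>i\<in>UNIV. (x0 $ i - x0 $ i) ^ (\<alpha> i)) = (0::real)"
        by (intro prod_zero) auto
      then show ?thesis by (simp add: p)
    qed
    have "(?T has_sum F x0 t) (range h)"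
      using hx by (subst has_sum_cong_neutral[where T=UNIV]) (use z in auto)
    then have "((?T \<circ> h) has_sum F x0 t) UNIV"
      using has_sum_reindex[OF inj_on_subset[OF injh subset_UNIV]] by blast
    moreover have "(?T \<circ> h) = (\<lambda>k. c (h k) * (t - t0) ^ k)"
      by (simp add: h_def fun_eq_iff)
    ultimately show "(\<lambda>k. c (h k) * (t - t0) ^ k) sums F x0 t"
      by (intro has_sum_imp_sums) simp
  qed
qed

lemma identity1:
  fixes g :: "real \<Rightarrow> real"
  assumes cont: "\<And>t. t \<in> {0..1} \<Longrightarrow> \<forall>e>0. \<exists>d>0. \<forall>s. \<bar>s - t\<bar> < d \<longrightarrow> \<bar>g s - g t\<bar> < e"
    and ps: "\<And>t0. t0 \<in> {0..1} \<Longrightarrow> \<exists>r>0. \<exists>a. \<forall>t. \<bar>t - t0\<bar> < r \<longrightarrow> (\<lambda>k. a k * (t - t0) ^ k) sums g t"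
    and xi: "\<xi> \<in> {0..1}" and eta: "\<eta> > 0"
    and zer: "\<forall>s\<in>{0..1}. \<bar>s - \<xi>\<bar> < \<eta> \<longrightarrow> g s = 0"
  shows "\<forall>t\<in>{0..1}. g t = 0"
proof -
  define Z where "Z = {t\<in>{0..1::real}. \<exists>\<eta>>0. \<forall>s\<in>{0..1}. \<bar>s - t\<bar> < \<eta> \<longrightarrow> g s = 0}"
  have ZZ: "g t = 0" if "t \<in> Z" for t using that unfolding Z_def by force
  have op: "openin (top_of_set {0..1}) Z"
    unfolding openin_euclidean_subtopology_iff
  proof (intro conjI ballI)
    show "Z \<subseteq> {0..1}" unfolding Z_def by auto
    fix x assume "x \<in> Z"
    then obtain e where e: "e > 0" "\<forall>s\<in>{0..1}. \<bar>s - x\<bar> < e \<longrightarrow> g s = 0" unfolding Z_def by auto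
    show "\<exists>e>0. \<forall>x'\<in>{0..1}. dist x' x < e \<longrightarrow> x' \<in> Z"
    proof (intro exI[of _ "e/2"] conjI ballI impI)
      show "e/2 > 0" using e by simp
      fix x' :: real assume x': "x' \<in> {0..1}" "dist x' x < e/2"
      show "x' \<in> Z" unfolding Z_def
      proof (intro CollectI conjI exI[of _ "e/2"] ballI impI)
        show "x' \<in> {0..1}" by (rule x')
        show "e/2 > 0" using e by simp
        fix s :: real assume "s \<in> {0..1}" "\<bar>s - x'\<bar> < e/2"
        moreover have "\<bar>s - x\<bar> < e" using x'(2) \<open>\<bar>s - x'\<bar> < e/2\<close> abs_triangle_ineq[of "s - x'" "x' - x"] unfolding dist_real_def by simp
        ultimately show "g s = 0" using e by auto
      qed
    qed
  qed
  have cl: "closedin (top_of_set {0..1}) Z"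
    unfolding closedin_limpt
  proof (intro conjI allI impI)
    show "Z \<subseteq> {0..1}" unfolding Z_def by auto
    fix t assume "t islimpt Z \<and> t \<in> {0..1}"
    then have lim: "t islimpt Z" and t: "t \<in> {0..1}" by auto
    have gt: "g t = 0"
    proof (rule ccontr)
      assume ne: "g t \<noteq> 0"
      obtain d where d: "d > 0" "\<forall>s. \<bar>s - t\<bar> < d \<longrightarrow> \<bar>g s - g t\<bar> < \<bar>g t\<bar>"
        using cont[OF t] ne by (meson zero_less_abs_iff)
      obtain z where "z \<in> Z" "dist z t < d" using lim d unfolding islimpt_approachable by blast
      then show False using d ZZ by (auto simp: dist_real_def)
    qed
    obtain r a where r: "r > 0" and sm: "\<forall>s. \<bar>s - t\<bar> < r \<longrightarrow> (\<lambda>k. a k * (s - t) ^ k) sums g s"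
      using ps[OF t] by blast
    have a0: "a 0 = 0"
    proof -
      have "(\<lambda>k. a k * (t - t) ^ k) sums g t" by (rule sm[rule_format]) (use r in simp)
      then have "a 0 = g t" by simp
      then show ?thesis using gt by simp
    qed
    have allz: "a m = 0" for m
    proof (rule ccontr)
      assume am: "a m \<noteq> 0"
      then have "m > 0" using a0 by (cases m) auto
      obtain s where s: "s > 0" "\<And>z. z \<in> cball t s - {t} \<Longrightarrow> g z \<noteq> 0"
        using powser_0_nonzero[where a=a and r=r and \<xi>=t and f=g and m=m] r sm gt am \<open>m > 0\<close> by auto
      obtain z where "z \<in> Z" "z \<noteq> t" "dist z t < s" using lim s unfolding islimpt_approachable by blast
      then show False using s(2)[of z] ZZ by (auto simp: dist_commute)
    qed
    show "t \<in> Z" unfolding Z_def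
    proof (intro CollectI conjI exI[of _ r] ballI impI)
      show "t \<in> {0..1}" by (rule t)
      show "r > 0" by (rule r)
      fix s :: real assume "s \<in> {0..1}" "\<bar>s - t\<bar> < r"
      then have "(\<lambda>k. a k * (s - t) ^ k) sums g s" using sm by auto
      then have "(\<lambda>k. 0::real) sums g s" using allz by simp
      then show "g s = 0" using sums_zero sums_unique2 by blast
    qed
  qed
  have "\<xi> \<in> Z" unfolding Z_def using xi eta zer by auto
  moreover have "Z = {} \<or> Z = {0..1}"
    using connected_clopen[THEN iffD1, OF connected_Icc[of "0::real" 1]] op cl by blast
  ultimately have "Z = {0..1}" by auto
  then show ?thesis using ZZ by auto
qed

theorem lemma2p3:
  fixes F :: "real ^ 'n \<Rightarrow> real \<Rightarrow> real"
  assumes "analytic_near_cube F"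
    and "\<exists>x\<in>unit_cube. \<exists>t\<in>{0..1}. \<exists>y\<in>unit_cube. \<exists>s\<in>{0..1}. F x t \<noteq> F y s"
    and "\<epsilon> \<in> {0<..1}"
    and "Sigma_eps F \<epsilon> \<noteq> {}"
  shows "\<exists>\<delta>\<in>{0<..1}. (\<epsilon>, \<delta>) \<in> Aset F"
proof -
  obtain U where U: "open U" "unit_cube \<times> {0..1} \<subseteq> U" "\<forall>(x, t)\<in>U. real_analytic_at F x t"
    using assms(1) unfolding analytic_near_cube_def by blast
  have an: "real_analytic_at F x t" if "x \<in> unit_cube" "t \<in> {0..1}" for x t
    using U that by blast
  have cont: "\<forall>e>0. \<exists>d>0. \<forall>y s. dist y x < d \<and> \<bar>s - t\<bar> < d \<longrightarrow> \<bar>F y s - F x t\<bar> < e"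
    if "x \<in> unit_cube" "t \<in> {0..1}" for x t
    using analytic_cont[OF an[OF that]] .
  have eps: "\<epsilon> > 0" "\<epsilon> \<le> 1" using assms(3) by auto
  define K where "K = Sigma_eps F \<epsilon>"
  have cube: "unit_cube = cbox (0::real^'n) 1"
    by (auto simp: unit_cube_def mem_box_cart)
  have Ksub: "K \<subseteq> unit_cube" unfolding K_def Sigma_eps_def by auto
  have Kc: "compact K"
  proof (cases "Sigma0 F = {}")
    case True
    then show ?thesis unfolding K_def Sigma_eps_def cube by simp
  next
    case False
    have "K = unit_cube \<inter> {x. \<epsilon> \<le> infdist x (Sigma0 F)}"
      unfolding K_def Sigma_eps_def using False by auto
    moreover have "closed {x::real^'n. \<epsilon> \<le> infdist x (Sigma0 F)}"
      by (intro closed_Collect_le continuous_intros)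
    ultimately show ?thesis unfolding cube by (auto intro: compact_Int_closed)
  qed
  have nz: "\<exists>t\<in>{0..1}. \<bar>\<xi> - t\<bar> < \<epsilon>/2 \<and> F x t \<noteq> 0" if x: "x \<in> K" and xi: "\<xi> \<in> {0..1}" for x \<xi>
  proof (rule ccontr)
    assume H: "\<not> ?thesis"
    have xc: "x \<in> unit_cube" using x Ksub by auto
    have "x \<notin> Sigma0 F"
    proof
      assume xs: "x \<in> Sigma0 F"
      then have "Sigma0 F \<noteq> {}" by auto
      then have "infdist x (Sigma0 F) \<ge> \<epsilon>" using x unfolding K_def Sigma_eps_def by auto
      then show False using xs eps by simp
    qed
    then obtain s where s: "s \<in> {0..1}" "F x s \<noteq> 0" using xc unfolding Sigma0_def by auto
    have "\<forall>t\<in>{0..1}. F x t = 0"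
    proof (rule identity1[where \<xi>=\<xi> and \<eta>="\<epsilon>/2"])
      fix t :: real assume t: "t \<in> {0..1}"
      show "\<forall>e>0. \<exists>d>0. \<forall>s. \<bar>s - t\<bar> < d \<longrightarrow> \<bar>F x s - F x t\<bar> < e"
        using cont[OF xc t] by (metis dist_self)
      show "\<exists>r>0. \<exists>a. \<forall>s. \<bar>s - t\<bar> < r \<longrightarrow> (\<lambda>k. a k * (s - t) ^ k) sums F x s"
        using analytic_1d[OF an[OF xc t]] .
    next
      show "\<xi> \<in> {0..1}" by (rule xi)
      show "\<epsilon>/2 > 0" using eps by simp
      show "\<forall>s\<in>{0..1}. \<bar>s - \<xi>\<bar> < \<epsilon>/2 \<longrightarrow> F x s = 0"
        using H by (auto simp: abs_minus_commute)
    qed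
    then show False using s by auto
  qed
  have "\<forall>p\<in>K \<times> {0..1::real}. \<exists>q. fst q \<in> {0..1} \<and> \<bar>snd p - fst q\<bar> < \<epsilon>/2 \<and> F (fst p) (fst q) \<noteq> 0 \<and>
      snd q > 0 \<and> (\<forall>y. dist y (fst p) < snd q \<longrightarrow> \<bar>F y (fst q)\<bar> > \<bar>F (fst p) (fst q)\<bar> / 2)"
  proof
    fix p assume p: "p \<in> K \<times> {0..1::real}"
    obtain t where t: "t \<in> {0..1}" "\<bar>snd p - t\<bar> < \<epsilon>/2" "F (fst p) t \<noteq> 0"
      using nz[of "fst p" "snd p"] p by auto
    have xc: "fst p \<in> unit_cube" using p Ksub by auto
    obtain d where d: "d > 0" "\<forall>y s. dist y (fst p) < d \<and> \<bar>s - t\<bar> < d \<longrightarrow>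
        \<bar>F y s - F (fst p) t\<bar> < \<bar>F (fst p) t\<bar> / 2"
      using cont[OF xc t(1)] t(3) by (meson half_gt_zero zero_less_abs_iff)
    have "\<forall>y. dist y (fst p) < d \<longrightarrow> \<bar>F y t\<bar> > \<bar>F (fst p) t\<bar> / 2"
    proof (intro allI impI)
      fix y assume "dist y (fst p) < d"
      then have "\<bar>F y t - F (fst p) t\<bar> < \<bar>F (fst p) t\<bar> / 2" using d by auto
      then show "\<bar>F y t\<bar> > \<bar>F (fst p) t\<bar> / 2" by linarith
    qed
    then show "\<exists>q. fst q \<in> {0..1} \<and> \<bar>snd p - fst q\<bar> < \<epsilon>/2 \<and> F (fst p) (fst q) \<noteq> 0 \<and>
      snd q > 0 \<and> (\<forall>y. dist y (fst p) < snd q \<longrightarrow> \<bar>F y (fst q)\<bar> > \<bar>F (fst p) (fst q)\<bar> / 2)"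
      using t d by (intro exI[of _ "(t, d)"]) auto
  qed
  then obtain Q where Q: "\<And>p. p \<in> K \<times> {0..1::real} \<Longrightarrow> fst (Q p) \<in> {0..1} \<and> \<bar>snd p - fst (Q p)\<bar> < \<epsilon>/2 \<and>
      F (fst p) (fst (Q p)) \<noteq> 0 \<and> snd (Q p) > 0 \<and>
      (\<forall>y. dist y (fst p) < snd (Q p) \<longrightarrow> \<bar>F y (fst (Q p))\<bar> > \<bar>F (fst p) (fst (Q p))\<bar> / 2)"
    using bchoice by metis
  define W where "W = (\<lambda>p. ball (fst p) (snd (Q p)) \<times> ball (fst (Q p)) (\<epsilon>/2))"
  have cov: "K \<times> {0..1::real} \<subseteq> (\<Union>p\<in>K \<times> {0..1::real}. W p)"
  proof
    fix p assume p: "p \<in> K \<times> {0..1::real}"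
    have "p \<in> W p" using Q[OF p] unfolding W_def
      by (cases p) (auto simp: dist_real_def abs_minus_commute)
    then show "p \<in> (\<Union>p\<in>K \<times> {0..1::real}. W p)" using p by blast
  qed
  have cK: "compact (K \<times> {0..1::real})" using Kc by (intro compact_Times) auto
  have Wo: "\<And>p. p \<in> K \<times> {0..1::real} \<Longrightarrow> open (W p)" by (auto simp: W_def intro!: open_Times)
  obtain C where C: "C \<subseteq> K \<times> {0..1::real}" "finite C" "K \<times> {0..1::real} \<subseteq> (\<Union>p\<in>C. W p)"
    using compactE_image[OF cK Wo cov] by blast
  obtain x0 where "x0 \<in> K" using assms(4) K_def by auto
  then have "(x0, 0) \<in> K \<times> {0..1::real}" by auto
  then have Cne: "C \<noteq> {}" using C(3) by auto
  define m where "m = Min ((\<lambda>p. \<bar>F (fst p) (fst (Q p))\<bar> / 2) ` C)"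
  have m0: "m > 0" unfolding m_def using C Cne Q by (auto simp: Min_gr_iff)
  have mle: "m \<le> \<bar>F (fst p) (fst (Q p))\<bar> / 2" if "p \<in> C" for p
    unfolding m_def using C(2) that by (intro Min_le) auto
  define \<delta> where "\<delta> = min 1 m"
  have d0: "\<delta> \<in> {0<..1}" unfolding \<delta>_def using m0 by auto
  have "(\<epsilon>, \<delta>) \<in> Aset F"
    unfolding Aset_def
  proof (clarify, intro conjI ballI)
    show "\<epsilon> \<in> {0<..1}" by (rule assms(3))
    show "\<delta> \<in> {0<..1}" by (rule d0)
    fix x \<xi> assume x: "x \<in> Sigma_eps F \<epsilon>" and xi: "\<xi> \<in> {0..(1::real)}"
    then have "(x, \<xi>) \<in> K \<times> {0..1::real}" unfolding K_def by auto
    then obtain p where p: "p \<in> C" "(x, \<xi>) \<in> W p" using C(3) by blast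
    have pK: "p \<in> K \<times> {0..1::real}" using p C by auto
    let ?t = "fst (Q p)"
    have xd: "dist x (fst p) < snd (Q p)" "dist \<xi> ?t < \<epsilon>/2"
      using p(2) unfolding W_def by (auto simp: dist_commute)
    have "\<bar>F x ?t\<bar> > \<bar>F (fst p) ?t\<bar> / 2" using Q[OF pK] xd by auto
    then have "\<bar>F x ?t\<bar> \<ge> \<delta>" using mle[OF p(1)] unfolding \<delta>_def by linarith
    moreover have "?t \<in> {0..1}" using Q[OF pK] by auto
    moreover have "?t \<in> {\<xi> - \<epsilon>/2 <..< \<xi> + \<epsilon>/2}" using xd(2) unfolding dist_real_def by (smt (verit) greaterThanLessThan_iff)
    ultimately show "{\<xi> - \<epsilon>/2 <..< \<xi> + \<epsilon>/2} \<inter> Fset F x \<delta> \<noteq> {}"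
      unfolding Fset_def by blast
  qed
  then show ?thesis using d0 by blast
qed

end
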